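(* Let $R$ be a commutative ring and $f\in R[[X]]$. Suppose $f_0=ab$ with $a,b\in R$ and $(a,b)=R$, and choose $r,s\in R$ with $ra+sb=1$. Set $g_0=0$ and, for $n\ge 1$, $g_n=f_n-rs\sum_{i=1}^{n-1}g_ig_{n-i}$. Then $g=\sum_{n\ge0}g_nX^n\in R[[X]]$ is the unique solution $g$ with $g_0=0$ of the equation $f=(a+sg)(b+rg)$, and $(a+sg,\,b+rg)=R[[X]]$.
   Context: $f_i$ denotes the coefficient of $X^i$ in $f$. *)

theory Defs
  imports "HOL-Computational_Algebra.Formal_Power_Series"
begin

function gcoeff :: "'a::comm_ring_1 \<Rightarrow> 'a \<Rightarrow> 'a fps \<Rightarrow> nat \<Rightarrow> 'a" where
  "gcoeff r s f n =
     (if n = 0 then 0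
      else fps_nth f n - r * s * (\<Sum>i\<in>{1..n-1}. gcoeff r s f i * gcoeff r s f (n - i)))"
  by auto
termination
  by (relation "measure (\<lambda>(r, s, f, n). n)") auto

definition gseries :: "'a::comm_ring_1 \<Rightarrow> 'a \<Rightarrow> 'a fps \<Rightarrow> 'a fps" where
  "gseries r s f = Abs_fps (gcoeff r s f)"

end

theory Submission
  imports Defs
begin

declare gcoeff.simps[simp del]

lemma sq_nth:
  fixes h :: "'a::comm_ring_1 fps"
  assumes "fps_nth h 0 = 0" "n \<ge> 1"
  shows "fps_nth (h*h) n = (\<Sum>i\<in>{1..n-1}. fps_nth h i * fps_nth h (n-i))"
proof -
  obtain m where n: "n = Suc m" using assms(2) by (cases n) auto
  have "fps_nth (h*h) n = (\<Sum>i=0..n. fps_nth h i * fps_nth h (n-i))" by (rule fps_mult_nth)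
  also have "\<dots> = fps_nth h 0 * fps_nth h n + (\<Sum>i=Suc 0..n. fps_nth h i * fps_nth h (n-i))"
    by (subst sum.atLeast_Suc_atMost) simp_all
  also have "(\<Sum>i=Suc 0..n. fps_nth h i * fps_nth h (n-i)) = (\<Sum>i=1..m. fps_nth h i * fps_nth h (n-i)) + fps_nth h n * fps_nth h 0"
    unfolding n by (subst sum.cl_ivl_Suc) simp
  finally show ?thesis using assms n by simp
qed

lemma ring_id:
  fixes A B S R h :: "'b::comm_ring_1"
  shows "(A + S*h) * (B + R*h) = A*B + (R*A + S*B)*h + (R*S)*(h*h)"
  by (simp add: algebra_simps)

lemma expand:
  fixes h :: "'a::comm_ring_1 fps"
  assumes "r * a + s * b = 1"
  shows "(fps_const a + fps_const s * h) * (fps_const b + fps_const r * h)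
       = fps_const (a*b) + h + fps_const (r*s) * (h*h)"
proof -
  have "fps_const r * fps_const a + fps_const s * fps_const b = fps_const (r*a+s*b)"
    by (simp only: fps_const_mult fps_const_add)
  also have "\<dots> = 1" using assms by simp
  finally have e: "fps_const r * fps_const a + fps_const s * fps_const b = (1::'a fps)" .
  show ?thesis unfolding ring_id e by (simp only: fps_const_mult mult_1 )
qed

lemma expand_nth:
  fixes h :: "'a::comm_ring_1 fps"
  assumes "r * a + s * b = 1" "fps_nth h 0 = 0" "n \<ge> 1"
  shows "fps_nth ((fps_const a + fps_const s * h) * (fps_const b + fps_const r * h)) n
       = fps_nth h n + r*s*(\<Sum>i\<in>{1..n-1}. fps_nth h i * fps_nth h (n-i))"
  using assms by (simp add: expand sq_nth)

theorem proposition2p2: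
  fixes f :: "'a::comm_ring_1 fps" and a b r s :: 'a
  assumes "fps_nth f 0 = a * b"
    and "r * a + s * b = 1"
  defines "g \<equiv> gseries r s f"
  shows "fps_nth g 0 = 0
    \<and> f = (fps_const a + fps_const s * g) * (fps_const b + fps_const r * g)
    \<and> (\<forall>h :: 'a fps. fps_nth h 0 = 0
          \<and> f = (fps_const a + fps_const s * h) * (fps_const b + fps_const r * h) \<longrightarrow> h = g)
    \<and> (\<exists>u v :: 'a fps. u * (fps_const a + fps_const s * g) + v * (fps_const b + fps_const r * g) = 1)"
proof -
  have gn: "fps_nth g n = gcoeff r s f n" for n unfolding g_def gseries_def by simp
  have g0: "fps_nth g 0 = 0" unfolding gn by (subst gcoeff.simps) simp
  have gsuc: "fps_nth g n = fps_nth f n - r*s*(\<Sum>i\<in>{1..n-1}. fps_nth g i * fps_nth g (n-i))" if "n \<ge> 1" for n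
    unfolding gn using that by (subst gcoeff.simps) simp
  have eq: "f = (fps_const a + fps_const s * g) * (fps_const b + fps_const r * g)"
  proof (rule fps_ext)
    fix n show "fps_nth f n = fps_nth ((fps_const a + fps_const s * g) * (fps_const b + fps_const r * g)) n"
    proof (cases "n = 0")
      case True then show ?thesis using assms(1) g0 by simp
    next
      case False then have "n \<ge> 1" by simp
      then show ?thesis using expand_nth[OF assms(2) g0] gsuc by simp
    qed
  qed
  have uniq: "h = g" if h0: "fps_nth h 0 = 0" and hf: "f = (fps_const a + fps_const s * h) * (fps_const b + fps_const r * h)" for h
  proof (rule fps_ext)
    fix n show "fps_nth h n = fps_nth g n"
    proof (induction n rule: less_induct)
      case (less n)
      show ?case
      proof (cases "n = 0")
        case True then show ?thesis using h0 g0 by simp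
      next
        case False then have n1: "n \<ge> 1" by simp
        have s: "(\<Sum>i\<in>{1..n-1}. fps_nth h i * fps_nth h (n-i)) = (\<Sum>i\<in>{1..n-1}. fps_nth g i * fps_nth g (n-i))"
          by (rule sum.cong) (auto intro!: arg_cong2[where f="(*)"] less.IH)
        have "fps_nth f n = fps_nth h n + r*s*(\<Sum>i\<in>{1..n-1}. fps_nth h i * fps_nth h (n-i))"
          using expand_nth[OF assms(2) h0 n1] hf by simp
        then show ?thesis using gsuc[OF n1] s by (simp add: algebra_simps)
      qed
    qed
  qed
  define p where "p = fps_const r * (fps_const a + fps_const s * g) + fps_const s * (fps_const b + fps_const r * g)"
  have p0: "fps_nth p 0 * 1 = 1" using g0 assms(2) by (simp add: p_def)
  have inv: "p * fps_right_inverse p 1 = 1" by (rule fps_right_inverse[OF p0])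
  obtain q where q: "p * q = 1" using inv by blast
  have ex: "\<exists>u v :: 'a fps. u * (fps_const a + fps_const s * g) + v * (fps_const b + fps_const r * g) = 1"
  proof (intro exI)
    show "(q * fps_const r) * (fps_const a + fps_const s * g) + (q * fps_const s) * (fps_const b + fps_const r * g) = 1"
      using q unfolding p_def by (simp only: mult.assoc distrib_left[symmetric] mult.commute)
  qed
  show ?thesis using g0 eq uniq ex by blast
qed

end
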